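(* Let $\alpha>0$, $A\ge0$, $B>0$, $t>0$, and let $P_n(x,t)=x^n+\mathsf{p}_1(n,t)x^{n-1}+\cdots$ be the monic polynomials orthogonal on $[0,\infty)$ w.r.t. $w(x,t)=x^\alpha e^{-x}(A+B\theta(x-t))$, with norms $h_n(t)$. Let $D_n(t)=\prod_{j=0}^{n-1}h_j(t)=\det\left(\int_0^\infty x^{i+j}w(x,t)dx\right)_{i,j=0}^{n-1}$ and $R_n(t)=Bt^\alpha e^{-t}\{P_n(t,t)\}^2/h_n(t)$. Then for $n\ge1$ $$-t\frac{d}{dt}\ln D_n(t)=-t\sum_{j=0}^{n-1}\frac{d}{dt}\ln h_j(t)=t\sum_{j=0}^{n-1}R_j(t)=-\mathsf{p}_1(n,t)-n(n+\alpha).$$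
   Context: $\theta$ is the Heaviside function ($1$ for $x>0$, $0$ otherwise); $P_n(t,t)$ is $P_n(x,t)$ at $x=t$. *)

theory Defs
  imports "HOL-Analysis.Analysis" "HOL-Computational_Algebra.Polynomial"
begin

definition heaviside :: "real \<Rightarrow> real" where
  "heaviside x = (if x > 0 then 1 else 0)"

definition wt :: "real \<Rightarrow> real \<Rightarrow> real \<Rightarrow> real \<Rightarrow> real \<Rightarrow> real" where
  "wt \<alpha> A B t x = x powr \<alpha> * exp (- x) * (A + B * heaviside (x - t))"

definition OP :: "real \<Rightarrow> real \<Rightarrow> real \<Rightarrow> real \<Rightarrow> nat \<Rightarrow> real poly" where
  "OP \<alpha> A B t n = (THE p. degree p = n \<and> lead_coeff p = 1 \<and>
      (\<forall>k<n. (LINT x:{0..}|lborel. x ^ k * poly p x * wt \<alpha> A B t x) = 0))"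

definition p1 :: "real \<Rightarrow> real \<Rightarrow> real \<Rightarrow> real \<Rightarrow> nat \<Rightarrow> real" where
  "p1 \<alpha> A B t n = coeff (OP \<alpha> A B t n) (n - 1)"

definition hn :: "real \<Rightarrow> real \<Rightarrow> real \<Rightarrow> real \<Rightarrow> nat \<Rightarrow> real" where
  "hn \<alpha> A B t n = (LINT x:{0..}|lborel. (poly (OP \<alpha> A B t n) x)\<^sup>2 * wt \<alpha> A B t x)"

definition Dn :: "real \<Rightarrow> real \<Rightarrow> real \<Rightarrow> real \<Rightarrow> nat \<Rightarrow> real" where
  "Dn \<alpha> A B t n = (\<Prod>j<n. hn \<alpha> A B t j)"

definition Rn :: "real \<Rightarrow> real \<Rightarrow> real \<Rightarrow> real \<Rightarrow> nat \<Rightarrow> real" where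
  "Rn \<alpha> A B t n = B * t powr \<alpha> * exp (- t) * (poly (OP \<alpha> A B t n) t)\<^sup>2 / hn \<alpha> A B t n"

end

theory Submission
  imports Defs
begin

locale ow = fixes \<alpha> A B :: real
  assumes apos: "\<alpha> > 0" and Anonneg: "A \<ge> 0" and Bpos: "B > 0"
begin

definition g :: "nat \<Rightarrow> real \<Rightarrow> real" where
  "g k x = x ^ k * x powr \<alpha> * exp (- x)"

lemma g_nonneg: "x \<ge> 0 \<Longrightarrow> g k x \<ge> 0"
  by (simp add: g_def)

lemma g_meas[measurable]: "g k \<in> borel_measurable borel"
  unfolding g_def by measurable

lemma g_HK: "g k integrable_on {0..}"
proof -
  have "((\<lambda>t. t powr (real k + \<alpha> + 1 - 1) / exp t) has_integral Gamma (real k + \<alpha> + 1)) {0..}"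
    by (rule Gamma_integral_real) (use apos in auto)
  then have "(\<lambda>t. t powr (real k + \<alpha> + 1 - 1) / exp t) integrable_on {0..}" by blast
  moreover have "t powr (real k + \<alpha> + 1 - 1) / exp t = g k t" if "t \<in> {0..}" for t
  proof (cases "t = 0")
    case True then show ?thesis using apos by (simp add: g_def)
  next
    case False
    then have "t > 0" using that by auto
    then show ?thesis by (simp add: g_def powr_add powr_realpow exp_minus field_simps)
  qed
  ultimately show ?thesis using integrable_spike_finite[of "{}"] 
    by (metis (no_types, lifting) integrable_eq)
qed

lemma g_int: "set_integrable lborel {0..} (g k)"
proof -
  have "g k absolutely_integrable_on {0..}"
    using g_HK by (subst absolutely_integrable_on_iff_nonneg) (auto intro: g_nonneg)
  then have "set_integrable lebesgue {0..} (g k)" by simp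
  then show ?thesis unfolding set_integrable_def
    by (subst (asm) integrable_completion) auto
qed

end

context ow begin

abbreviation w where "w s x \<equiv> wt \<alpha> A B s x"

lemma wt_meas[measurable]: "(\<lambda>x. wt \<alpha> A B s x) \<in> borel_measurable borel"
  unfolding wt_def heaviside_def by measurable

lemma w_bound: assumes "x \<ge> 0" shows "0 \<le> x^k * w s x \<and> x^k * w s x \<le> (A + B) * g k x"
proof -
  have G: "g k x \<ge> 0" using assms by (rule g_nonneg)
  have e: "x^k * w s x = g k x * (A + B * heaviside (x - s))"
    by (simp add: wt_def g_def)
  have "0 \<le> A + B * heaviside (x - s)" "A + B * heaviside (x - s) \<le> A + B"
    using Anonneg Bpos by (auto simp: heaviside_def)
  moreover have "g k x * (A + B * heaviside (x - s)) \<le> g k x * (A + B)"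
    using G \<open>A + B * heaviside (x - s) \<le> A + B\<close> by (simp add: mult_left_mono)
  ultimately show ?thesis unfolding e using G
    by (simp add: mult.commute)
qed

lemma mon_int: "set_integrable lborel {0..} (\<lambda>x. x^k * w s x)"
proof (rule set_integrable_bound[of _ _ "\<lambda>x. (A+B) * g k x"])
  show "set_integrable lborel {0..} (\<lambda>x. (A+B) * g k x)" using g_int by simp
  show "set_borel_measurable lborel {0..} (\<lambda>x. x ^ k * w s x)"
    unfolding set_borel_measurable_def by measurable
  show "AE x in lborel. x \<in> {0..} \<longrightarrow> norm (x ^ k * w s x) \<le> norm ((A + B) * g k x)"
    using w_bound g_nonneg Anonneg Bpos by (auto intro!: AE_I2)
qed

definition mu where "mu k s = (LINT x:{0..}|lborel. x^k * w s x)"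
definition L where "L s p = (LINT x:{0..}|lborel. poly p x * w s x)"

lemma sum_int:
  assumes "finite I" "\<And>i. i \<in> I \<Longrightarrow> set_integrable M S (f i)"
  shows "set_integrable M S (\<lambda>x. \<Sum>i\<in>I. (f i x::real))
     \<and> (LINT x:S|M. (\<Sum>i\<in>I. f i x)) = (\<Sum>i\<in>I. LINT x:S|M. f i x)"
  using assms
proof (induction I rule: finite_induct)
  case empty then show ?case by (simp add: set_integrable_def)
next
  case (insert a F)
  then have 1: "set_integrable M S (f a)" "set_integrable M S (\<lambda>x. \<Sum>i\<in>F. f i x)" by auto
  show ?case using set_integral_add[OF 1] insert by simp
qed

lemma poly_int: "set_integrable lborel {0..} (\<lambda>x. poly p x * w s x)"
  and L_mu: "L s p = (\<Sum>i\<le>degree p. coeff p i * mu i s)"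
proof -
  have e: "poly p x * w s x = (\<Sum>i\<le>degree p. coeff p i * (x^i * w s x))" for x
    by (simp add: poly_altdef sum_distrib_right mult.assoc)
  have "set_integrable lborel {0..} (\<lambda>x. \<Sum>i\<le>degree p. coeff p i * (x^i * w s x))
     \<and> (LINT x:{0..}|lborel. (\<Sum>i\<le>degree p. coeff p i * (x^i * w s x))) 
       = (\<Sum>i\<le>degree p. LINT x:{0..}|lborel. coeff p i * (x^i * w s x))"
    by (rule sum_int) (auto intro: mon_int)
  then show "set_integrable lborel {0..} (\<lambda>x. poly p x * w s x)"
    "L s p = (\<Sum>i\<le>degree p. coeff p i * mu i s)"
    unfolding e L_def mu_def by auto
qed

lemma L_add: "L s (p + q) = L s p + L s q"
  unfolding L_def using poly_int[of p s] poly_int[of q s]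
  by (simp add: distrib_right set_integral_add)

lemma L_diff: "L s (p - q) = L s p - L s q"
  unfolding L_def using poly_int[of p s] poly_int[of q s]
  by (simp add: left_diff_distrib set_integral_diff)

lemma L_smult: "L s (smult c p) = c * L s p"
  unfolding L_def by (simp add: mult.assoc)

lemma L_0[simp]: "L s 0 = 0" by (simp add: L_def)

lemma L_sum: "finite I \<Longrightarrow> L s (\<Sum>i\<in>I. f i) = (\<Sum>i\<in>I. L s (f i))"
  by (induction I rule: finite_induct) (auto simp: L_add)


lemma L_mu': "degree p \<le> N \<Longrightarrow> L s p = (\<Sum>i\<le>N. coeff p i * mu i s)"
proof -
  assume "degree p \<le> N"
  then have "L s p = L s (\<Sum>i\<le>N. monom (coeff p i) i)" by (simp add: poly_as_sum_of_monoms')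
  also have "\<dots> = (\<Sum>i\<le>N. L s (monom (coeff p i) i))" by (simp add: L_sum)
  also have "\<dots> = (\<Sum>i\<le>N. coeff p i * mu i s)"
    by (rule sum.cong) (auto simp: L_def mu_def poly_monom mult.assoc)
  finally show ?thesis .
qed

lemma L_sq_nonneg: "L s (p * p) \<ge> 0"
  unfolding L_def set_lebesgue_integral_def
  using Anonneg Bpos
  by (intro Bochner_Integration.integral_nonneg) (auto simp: wt_def heaviside_def indicator_def intro!: mult_nonneg_nonneg)

end

context ow begin

lemma L_sq_pos: assumes "p \<noteq> 0" shows "L s (p * p) > 0"
proof (rule ccontr)
  assume "\<not> L s (p * p) > 0"
  then have z: "L s (p * p) = 0" using L_sq_nonneg[of s p] by linarith
  define c where "c = max s 0"
  have int: "integrable lborel (\<lambda>x. indicator {0..} x *\<^sub>R (poly (p*p) x * w s x))"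
    using poly_int[of "p*p" s] by (simp add: set_integrable_def)
  have nn: "AE x in lborel. 0 \<le> indicator {0..} x *\<^sub>R (poly (p*p) x * w s x)"
    using Anonneg Bpos
    by (intro AE_I2) (auto simp: wt_def heaviside_def indicator_def intro!: mult_nonneg_nonneg)
  from z have "AE x in lborel. indicator {0..} x *\<^sub>R (poly (p*p) x * w s x) = 0"
    using integral_nonneg_eq_0_iff_AE[OF int nn] by (simp add: L_def set_lebesgue_integral_def)
  then have AEf: "AE x in lborel. x \<notin> {c<..<c+1} - {x. poly p x = 0}"
  proof (rule AE_mp, intro AE_I2 impI)
    fix x assume h: "indicator {0..} x *\<^sub>R (poly (p*p) x * w s x) = 0"
    show "x \<notin> {c<..<c+1} - {x. poly p x = 0}"
    proof
      assume x: "x \<in> {c<..<c+1} - {x. poly p x = 0}"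
      then have "x > 0" "x > s" by (auto simp: c_def)
      then have "w s x > 0" using Anonneg Bpos by (auto simp: wt_def heaviside_def)
      moreover have "poly p x * poly p x > 0" using x by (auto simp: zero_less_mult_iff linorder_neq_iff)
      ultimately have "poly (p*p) x * w s x > 0" by simp
      with h \<open>x > 0\<close> show False by (auto simp: indicator_def)
    qed
  qed
  have "{c<..<c+1} - {x. poly p x = 0} \<in> null_sets lborel"
  proof -
    have "{x. poly p x = 0} \<in> sets borel"
      using poly_roots_finite[OF assms] by (intro borel_closed finite_imp_closed)
    then have "{c<..<c+1} - {x. poly p x = 0} \<in> sets borel" by auto
    with AEf show ?thesis by (subst AE_iff_null_sets) auto
  qed
  moreover have "{x. poly p x = 0} \<in> null_sets lborel"
    using poly_roots_finite[OF assms] by (rule finite_imp_null_set_lborel)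
  ultimately have "({c<..<c+1} - {x. poly p x = 0}) \<union> {x. poly p x = 0} \<in> null_sets lborel"
    by (rule null_sets.Un)
  then have "{c<..<c+1} \<in> null_sets lborel"
    by (rule null_sets_subset) auto
  then have "emeasure lborel {c<..<c+1} = 0" by auto
  then show False by simp
qed

lemma L_sq_ne: "p \<noteq> 0 \<Longrightarrow> L s (p * p) \<noteq> 0"
  using L_sq_pos[of p s] by simp

end

context ow begin

definition orth where "orth s p n \<longleftrightarrow> (\<forall>k<n. L s (monom 1 k * p) = 0)"

lemma low_expand: assumes "\<forall>k\<ge>n. coeff r k = 0" shows "r = (\<Sum>k<n. monom (coeff r k) k)"
proof (rule poly_eqI)
  fix i show "coeff r i = coeff (\<Sum>k<n. monom (coeff r k) k) i"
    using assms by (cases "i < n") (auto simp: coeff_sum coeff_monom)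
qed

lemma monom_mult_eq: "monom (c::real) k * p = smult c (monom 1 k * p)"
proof -
  have "smult c (monom 1 k * p) = smult c (monom 1 k) * p" by (rule mult_smult_left[symmetric])
  also have "\<dots> = monom c k * p" by (simp only: smult_monom) simp
  finally show ?thesis by (rule sym)
qed

lemma orth_low: assumes "orth s p n" "\<forall>k\<ge>n. coeff r k = 0" shows "L s (r * p) = 0"
proof -
  have e: "r * p = (\<Sum>k<n. monom (coeff r k) k) * p"
    by (rule arg_cong[where f="\<lambda>q. q * p"], rule low_expand[OF assms(2)])
  also have "\<dots> = (\<Sum>k<n. smult (coeff r k) (monom 1 k * p))"
    unfolding sum_distrib_right by (intro sum.cong refl, rule monom_mult_eq)
  finally have "r * p = (\<Sum>k<n. smult (coeff r k) (monom 1 k * p))" .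
  then show ?thesis using assms(1) by (simp add: L_sum L_smult orth_def)
qed

fun Q :: "real \<Rightarrow> nat \<Rightarrow> real poly" where
  "Q s 0 = 1"
| "Q s (Suc n) = monom 1 (Suc n) -
     (\<Sum>j\<le>n. smult (L s (monom 1 (Suc n) * Q s j) / L s (Q s j * Q s j)) (Q s j))"

declare Q.simps(2)[simp del]

lemma Q_coeff: "coeff (Q s n) n = 1 \<and> (\<forall>k>n. coeff (Q s n) k = 0)"
proof (induction n rule: less_induct)
  case (less n)
  show ?case
  proof (cases n)
    case 0 then show ?thesis by auto
  next
    case (Suc m)
    have z: "coeff (Q s j) k = 0" if "j \<le> m" "k > m" for j k
      using less[of j] that Suc by auto
    show ?thesis unfolding Suc Q.simps(2)
      using z by (auto simp: coeff_sum coeff_monom)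
  qed
qed

lemma Q_top: "coeff (Q s n) n = 1" using Q_coeff by blast
lemma Q_high: "k > n \<Longrightarrow> coeff (Q s n) k = 0" using Q_coeff by blast
lemma Q_ne: "Q s n \<noteq> 0" using Q_top[of s n] by auto
lemma Q_degree: "degree (Q s n) = n"
  using Q_top[of s n] Q_high[where s=s and n=n] by (intro antisym degree_le le_degree) auto

lemma orth_Suc: "orth s p k \<Longrightarrow> L s (monom 1 k * p) = 0 \<Longrightarrow> orth s p (Suc k)"
  by (auto simp: orth_def less_Suc_eq)

lemma Q_orth: "orth s (Q s n) n"
proof (induction n rule: less_induct)
  case (less n)
  show ?case
  proof (cases n)
    case 0 then show ?thesis by (simp add: orth_def)
  next
    case (Suc m)
    have QQ: "L s (Q s j * Q s i) = 0" if "j < i" "i \<le> m" for i j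
      using orth_low[OF less[of i], of "Q s j"] that Suc Q_high[where s=s and n=j] by auto
    let ?c = "\<lambda>j. L s (monom 1 (Suc m) * Q s j) / L s (Q s j * Q s j)"
    have GS: "L s (Q s i * Q s (Suc m)) = 0" if "i \<le> m" for i
    proof -
      have e1: "Q s i * Q s (Suc m) = monom 1 (Suc m) * Q s i
          - (\<Sum>j\<le>m. smult (?c j) (Q s j * Q s i))"
        unfolding Q.simps(2) right_diff_distrib sum_distrib_left
        by (simp add: mult_smult_right mult_smult_left mult.commute)
      have "L s (Q s i * Q s (Suc m)) = L s (monom 1 (Suc m) * Q s i)
          - (\<Sum>j\<le>m. ?c j * L s (Q s j * Q s i))"
        unfolding e1 L_diff L_sum[OF finite_atMost] L_smult ..
      also have "(\<Sum>j\<le>m. ?c j * L s (Q s j * Q s i)) = (\<Sum>j\<in>{i}. ?c j * L s (Q s j * Q s i))"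
      proof (rule sum.mono_neutral_right)
        show "\<forall>j\<in>{..m} - {i}. ?c j * L s (Q s j * Q s i) = 0"
        proof
          fix j assume j: "j \<in> {..m} - {i}"
          show "?c j * L s (Q s j * Q s i) = 0"
          proof (cases "j < i")
            case True then show ?thesis using QQ[of j i] that by simp
          next
            case False then have "i < j" using j by auto
            then show ?thesis using QQ[of i j] j by (simp add: mult.commute)
          qed
        qed
      qed (use that in auto)
      also have "\<dots> = L s (monom 1 (Suc m) * Q s i)"
        using L_sq_ne[OF Q_ne[of s i], of s] by simp
      finally show ?thesis by simp
    qed
    have "orth s (Q s (Suc m)) k" if "k \<le> Suc m" for k
      using that
    proof (induction k)
      case 0 then show ?case by (simp add: orth_def)
    next
      case (Suc k)
      then have ok: "orth s (Q s (Suc m)) k" by simp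
      have "monom 1 k * Q s (Suc m) = Q s k * Q s (Suc m) + (monom 1 k - Q s k) * Q s (Suc m)"
        by (simp add: algebra_simps)
      then have "L s (monom 1 k * Q s (Suc m)) = L s (Q s k * Q s (Suc m)) + L s ((monom 1 k - Q s k) * Q s (Suc m))"
        by (simp add: L_add)
      also have "L s ((monom 1 k - Q s k) * Q s (Suc m)) = 0"
        using Q_top[of s k] Q_high[where s=s and n=k] by (intro orth_low[OF ok]) (auto simp: coeff_monom)
      also have "L s (Q s k * Q s (Suc m)) = 0" using GS Suc.prems by simp
      finally show ?case using orth_Suc[OF ok] by simp
    qed
    then show ?thesis using Suc by simp
  qed
qed

lemma Q_orth_low: "\<forall>k\<ge>n. coeff r k = 0 \<Longrightarrow> L s (r * Q s n) = 0"
  by (rule orth_low[OF Q_orth])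

lemma Q_unique:
  assumes "coeff p n = 1" "\<forall>k>n. coeff p k = 0" "orth s p n"
  shows "p = Q s n"
proof (rule ccontr)
  assume ne: "p \<noteq> Q s n"
  let ?r = "p - Q s n"
  have low: "\<forall>k\<ge>n. coeff ?r k = 0"
    using assms Q_top[of s n] Q_high[where s=s and n=n] by (auto simp: le_less)
  have "L s (?r * ?r) = L s (?r * p) - L s (?r * Q s n)"
    by (simp add: right_diff_distrib L_diff)
  also have "\<dots> = 0" using orth_low[OF assms(3) low] Q_orth_low[OF low] by simp
  finally show False using L_sq_ne[of ?r s] ne by simp
qed

lemma OP_Q: "OP \<alpha> A B s n = Q s n"
  unfolding OP_def
proof (rule the_equality)
  have "orth s (Q s n) n" by (rule Q_orth)
  then show "degree (Q s n) = n \<and> lead_coeff (Q s n) = 1 \<and>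
    (\<forall>k<n. (LINT x:{0..}|lborel. x ^ k * poly (Q s n) x * wt \<alpha> A B s x) = 0)"
    by (simp add: Q_degree Q_top orth_def L_def poly_monom)
next
  fix p assume h: "degree p = n \<and> lead_coeff p = 1 \<and>
    (\<forall>k<n. (LINT x:{0..}|lborel. x ^ k * poly p x * wt \<alpha> A B s x) = 0)"
  then have "orth s p n" by (simp add: orth_def L_def poly_monom)
  moreover have "coeff p n = 1" "\<forall>k>n. coeff p k = 0" using h by (auto simp: coeff_eq_0)
  ultimately show "p = Q s n" by (intro Q_unique) auto
qed

lemma Q_min:
  assumes "coeff p n = 1" "\<forall>k>n. coeff p k = 0"
  shows "L s (Q s n * Q s n) \<le> L s (p * p)"
proof -
  let ?r = "p - Q s n"
  have low: "\<forall>k\<ge>n. coeff ?r k = 0"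
    using assms Q_top[of s n] Q_high[where s=s and n=n] by (auto simp: le_less)
  have "p * p = Q s n * Q s n + (?r * Q s n + ?r * Q s n) + ?r * ?r"
    by (simp add: algebra_simps)
  then have "L s (p * p) = L s (Q s n * Q s n) + (L s (?r * Q s n) + L s (?r * Q s n)) + L s (?r * ?r)"
    by (simp only: L_add)
  then show ?thesis using Q_orth_low[OF low] L_sq_nonneg[of s ?r] by simp
qed

lemma hn_Q: "hn \<alpha> A B s n = L s (Q s n * Q s n)"
  by (simp add: hn_def L_def OP_Q power2_eq_square)

end

context ow begin

lemma g_cont: "continuous_on {0..} (g k)"
proof -
  have "continuous_on {0..} (\<lambda>x::real. x powr \<alpha>)"
    using apos by (intro continuous_on_powr') (auto intro: continuous_intros)
  then show ?thesis unfolding g_def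
    by (intro continuous_on_mult continuous_on_power continuous_on_id) (auto intro!: continuous_intros)
qed

lemma g_cont_ab: "continuous_on {0..b} (g k)"
  by (rule continuous_on_subset[OF g_cont]) auto

definition I where "I k s = integral {0..s} (g k)"
definition C where "C k = (LINT x:{0..}|lborel. g k x)"

lemma g_int_ab: "set_integrable lborel {0..s} (g k)"
  by (rule set_integrable_subset[OF g_int]) auto

lemma mu_formula: assumes "s \<ge> 0" shows "mu k s = (A + B) * C k - B * I k s"
proof -
  have e: "x^k * w s x = (A + B) * g k x - B * (indicator {..s} x * g k x)" for x
    by (auto simp: wt_def heaviside_def g_def indicator_def algebra_simps)
  have i2: "set_integrable lborel {0..} (\<lambda>x. indicator {..s} x * g k x)"
  proof -
    have "(\<lambda>x. indicator {0..} x *\<^sub>R (indicator {..s} x * g k x)) = (\<lambda>x. indicator {0..s} x *\<^sub>R g k x)"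
      by (auto simp: indicator_def)
    then show ?thesis using g_int_ab[of s k] unfolding set_integrable_def by simp
  qed
  have i3: "(LINT x:{0..}|lborel. indicator {..s} x * g k x) = I k s"
  proof -
    have "(\<lambda>x. indicator {0..} x *\<^sub>R (indicator {..s} x * g k x)) = (\<lambda>x. indicator {0..s} x *\<^sub>R g k x)"
      by (auto simp: indicator_def)
    then have "(LINT x:{0..}|lborel. indicator {..s} x * g k x) = (LINT x:{0..s}|lborel. g k x)"
      unfolding set_lebesgue_integral_def by simp
    also have "\<dots> = I k s" unfolding I_def by (rule set_borel_integral_eq_integral(2)[OF g_int_ab])
    finally show ?thesis .
  qed
  have "mu k s = (LINT x:{0..}|lborel. (A + B) * g k x - B * (indicator {..s} x * g k x))"
    unfolding mu_def e ..
  also have "\<dots> = (A + B) * C k - B * I k s"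
    using g_int[of k] i2 i3 by (simp add: C_def set_integral_diff)
  finally show ?thesis .
qed

lemma I_deriv: assumes "s > 0" shows "(I k has_real_derivative g k s) (at s)"
proof -
  have "((\<lambda>x. integral {0..x} (g k)) has_real_derivative g k s) (at s within {0..s+1})"
    using assms by (intro integral_has_real_derivative g_cont_ab) simp
  moreover have "s \<in> interior {0..s+1}" using assms by (simp only: interior_atLeastAtMost_real) simp
  ultimately show ?thesis unfolding I_def by (simp only: at_within_interior)
qed

lemma I_cont: "continuous_on {0..b} (I k)"
  unfolding I_def by (rule indefinite_integral_continuous_1) (rule integrable_continuous_real[OF g_cont_ab])

lemma mu_deriv: assumes "s > 0" shows "(mu k has_real_derivative - B * g k s) (at s)"
proof -
  have "((\<lambda>s. (A + B) * C k - B * I k s) has_real_derivative - B * g k s) (at s)"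
    using I_deriv[OF assms] by (auto intro!: derivative_eq_intros)
  then show ?thesis
    by (rule has_field_derivative_transform_within_open[where S="{0<..}"])
       (use assms mu_formula in auto)
qed

lemma C_rec: "C (Suc k) = (real k + \<alpha> + 1) * C k"
proof -
  have CG: "C j = Gamma (real j + \<alpha> + 1)" for j
  proof -
    have "((\<lambda>t. t powr (real j + \<alpha> + 1 - 1) / exp t) has_integral Gamma (real j + \<alpha> + 1)) {0..}"
      by (rule Gamma_integral_real) (use apos in auto)
    moreover have "t powr (real j + \<alpha> + 1 - 1) / exp t = g j t" if "t \<in> {0..}" for t
    proof (cases "t = 0")
      case True then show ?thesis using apos by (simp add: g_def)
    next
      case False
      then have "t > 0" using that by auto
      then show ?thesis by (simp add: g_def powr_add powr_realpow exp_minus field_simps)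
    qed
    ultimately have "(g j has_integral Gamma (real j + \<alpha> + 1)) {0..}"
      by (rule has_integral_eq[rotated]) auto
    then show ?thesis unfolding C_def using set_borel_integral_eq_integral(2)[OF g_int[of j]]
      by (simp add: integral_unique)
  qed
  have "real k + \<alpha> + 1 \<notin> \<int>\<^sub>\<le>\<^sub>0" using apos by (auto elim!: nonpos_Ints_cases)
  then show ?thesis unfolding CG using Gamma_plus1[of "real k + \<alpha> + 1"] by (simp add: add_ac)
qed

end

context ow begin

lemma sg_deriv: assumes "s > 0"
  shows "((\<lambda>s. s * g k s) has_real_derivative ((real k + 1 + \<alpha>) * g k s - g (Suc k) s)) (at s)"
proof -
  have e: "(\<lambda>s. s * g k s) = (\<lambda>s. s^(Suc k) * s powr \<alpha> * exp (- s))"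
    by (auto simp: g_def)
  have p: "s powr (\<alpha> - 1) = s powr \<alpha> / s" using assms by (simp add: powr_diff)
  have "((\<lambda>s. s^(Suc k) * s powr \<alpha> * exp (- s)) has_real_derivative
     (real (Suc k) * s ^ k * s powr \<alpha> * exp (- s) + s^(Suc k) * (\<alpha> * s powr (\<alpha> - 1)) * exp (- s)
      - s^(Suc k) * s powr \<alpha> * exp (- s))) (at s)"
    using assms by (auto intro!: derivative_eq_intros simp: algebra_simps simp del: power_Suc)
  moreover have "real (Suc k) * s ^ k * s powr \<alpha> * exp (- s) + s^(Suc k) * (\<alpha> * s powr (\<alpha> - 1)) * exp (- s)
      - s^(Suc k) * s powr \<alpha> * exp (- s) = (real k + 1 + \<alpha>) * g k s - g (Suc k) s"
    using assms unfolding p g_def by (simp add: field_simps)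
  ultimately show ?thesis unfolding e by simp
qed

lemma I_zero: "I j 0 = 0" by (simp add: I_def)

lemma I_rec: assumes "s \<ge> 0"
  shows "I (Suc k) s - (real k + \<alpha> + 1) * I k s = - s * g k s"
proof (cases "s = 0")
  case True then show ?thesis by (simp add: I_zero)
next
  case False
  then have s: "s > 0" using assms by auto
  define H where "H s = I (Suc k) s - (real k + \<alpha> + 1) * I k s + s * g k s" for s
  have "H s = H 0"
  proof (rule DERIV_isconst_end[OF s])
    show "continuous_on {0..s} H" unfolding H_def
      by (intro continuous_intros I_cont continuous_on_mult continuous_on_id g_cont_ab)
    fix x assume x: "0 < x" "x < s"
    have "(H has_real_derivative (g (Suc k) x - (real k + \<alpha> + 1) * g k x + ((real k + 1 + \<alpha>) * g k x - g (Suc k) x))) (at x)"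
      unfolding H_def using x
      by (intro DERIV_add DERIV_diff DERIV_cmult I_deriv sg_deriv) auto
    then show "(H has_real_derivative 0) (at x)" by (simp add: algebra_simps)
  qed
  then show ?thesis by (simp add: H_def I_zero algebra_simps)
qed

lemma mu_rec: assumes "s \<ge> 0"
  shows "mu (Suc k) s = (real k + \<alpha> + 1) * mu k s + B * s * g k s"
proof -
  have 1: "I (Suc k) s = (real k + \<alpha> + 1) * I k s - s * g k s"
    using I_rec[OF assms, of k] by (simp add: algebra_simps)
  show ?thesis by (simp add: mu_formula[OF assms] C_rec 1 algebra_simps)
qed

definition T where "T q = smult (\<alpha> + 1) q + pCons 0 (pderiv q) - pCons 0 q"

lemma T_add: "T (p + q) = T p + T q"
  by (simp add: T_def smult_add_right pderiv_add algebra_simps)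

lemma T_0: "T 0 = 0" by (simp add: T_def)

lemma xpderiv_monom: "pCons 0 (pderiv (monom c k)) = monom (c * real k) k"
proof (rule poly_eqI)
  fix n show "coeff (pCons 0 (pderiv (monom c k))) n = coeff (monom (c * real k) k) n"
    by (cases n) (auto simp: coeff_pderiv coeff_monom)
qed

lemma L_monom: "L s (monom c k) = c * mu k s"
  by (simp add: L_def mu_def poly_monom mult.assoc)

lemma T_monom: assumes "t \<ge> 0"
  shows "L t (T (monom c k)) = - B * t * t powr \<alpha> * exp (- t) * poly (monom c k) t"
proof -
  have "T (monom c k) = monom ((\<alpha> + 1) * c) k + monom (c * real k) k - monom c (Suc k)"
    by (simp add: T_def xpderiv_monom monom_Suc smult_monom)
  then have "L t (T (monom c k)) = (\<alpha> + 1) * c * mu k t + c * real k * mu k t - c * mu (Suc k) t"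
    by (simp add: L_add L_diff L_monom)
  also have "\<dots> = - B * t * t powr \<alpha> * exp (- t) * poly (monom c k) t"
    using mu_rec[OF assms, of k] by (simp add: poly_monom g_def algebra_simps)
  finally show ?thesis .
qed

lemma T_poly: assumes "t \<ge> 0"
  shows "L t (T q) = - B * t * t powr \<alpha> * exp (- t) * poly q t"
proof -
  have "L t (T (\<Sum>i\<in>S. monom (coeff q i) i)) = - B * t * t powr \<alpha> * exp (- t) * poly (\<Sum>i\<in>S. monom (coeff q i) i) t"
    if "finite S" for S
    using that
  proof (induction S rule: finite_induct)
    case empty then show ?case by (simp add: T_0)
  next
    case (insert i S)
    then show ?case by (simp add: T_add L_add T_monom[OF assms] algebra_simps)
  qed
  then show ?thesis using poly_as_sum_of_monoms[of q] by (metis finite_atMost)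
qed

end

context ow begin

definition h where "h s j = L s (Q s j * Q s j)"
definition X where "X s j = L s (pCons 0 (Q s j * Q s j))"

lemma h_pos: "h s j > 0" unfolding h_def by (rule L_sq_pos[OF Q_ne])

lemma pCons0_eq: "pCons 0 q = pCons 0 1 * (q :: real poly)" by simp

lemma pCons0_mult: "pCons 0 (p * q) = p * pCons 0 (q :: real poly)"
  by (metis pCons0_eq mult.left_commute)

lemma coeff_xD: "coeff (pCons 0 (pderiv p)) k = real k * coeff p k"
  by (cases k) (auto simp: coeff_pderiv)

lemma L_xderiv: "L s (pCons 0 (pderiv (Q s j * Q s j))) = 2 * real j * h s j"
proof -
  let ?Q = "Q s j"
  let ?D = "pCons 0 (pderiv ?Q)"
  let ?r = "?D - smult (real j) ?Q"
  have low: "\<forall>k\<ge>j. coeff ?r k = 0"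
    using Q_high[where s=s and n=j] by (auto simp: coeff_xD le_less)
  have "?D * ?Q = smult (real j) (?Q * ?Q) + ?r * ?Q" by (simp add: algebra_simps)
  then have 1: "L s (?D * ?Q) = real j * h s j"
    using Q_orth_low[OF low] by (simp add: L_add L_smult h_def)
  have e: "pCons 0 (pderiv (?Q * ?Q)) = ?D * ?Q + ?D * ?Q"
    by (simp add: pderiv_mult pCons0_mult[symmetric] mult.commute)
  show ?thesis unfolding e L_add 1 by simp
qed

lemma T_QQ: assumes "t \<ge> 0"
  shows "(\<alpha> + 1) * h t j + 2 * real j * h t j - X t j
    = - B * t * t powr \<alpha> * exp (- t) * (poly (Q t j) t)^2"
proof -
  have "L t (T (Q t j * Q t j)) = (\<alpha> + 1) * h t j + 2 * real j * h t j - X t j"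
    unfolding T_def by (simp add: L_add L_diff L_smult L_xderiv h_def X_def)
  then show ?thesis using T_poly[OF assms, of "Q t j * Q t j"] by (simp add: power2_eq_square)
qed

lemma coeff_rec: "coeff (Q s (Suc j)) j = (if j = 0 then 0 else coeff (Q s j) (j - 1)) - X s j / h s j"
proof -
  let ?r = "pCons 0 (Q s j) - Q s (Suc j)"
  let ?r2 = "?r - smult (coeff ?r j) (Q s j)"
  have low2: "\<forall>k\<ge>j. coeff ?r2 k = 0"
  proof (intro allI impI)
    fix k assume "j \<le> k"
    then consider "k = j" | "k = Suc j" | "k > Suc j" by linarith
    then show "coeff ?r2 k = 0"
      by cases (auto simp: Q_top Q_high coeff_pCons')
  qed
  have "?r = ?r2 + smult (coeff ?r j) (Q s j)" by simp
  then have "L s (?r * Q s j) = L s (?r2 * Q s j) + coeff ?r j * h s j"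
    by (metis L_add L_smult distrib_right h_def mult_smult_left)
  then have a: "L s (?r * Q s j) = coeff ?r j * h s j" using Q_orth_low[OF low2] by simp
  have lowj: "\<forall>k\<ge>Suc j. coeff (Q s j) k = 0" using Q_high by auto
  have e2: "?r * Q s j = pCons 0 (Q s j * Q s j) - Q s j * Q s (Suc j)"
    by (simp add: algebra_simps)
  have "L s (?r * Q s j) = X s j - L s (Q s j * Q s (Suc j))"
    unfolding e2 L_diff X_def ..
  also have "L s (Q s j * Q s (Suc j)) = 0" by (rule Q_orth_low[OF lowj])
  finally have "coeff ?r j = X s j / h s j" using a h_pos[of s j] by (simp add: field_simps)
  then show ?thesis by (auto simp: coeff_pCons')
qed

lemma sum_rec: assumes "n \<ge> 1"
  shows "(\<Sum>j<n. X s j / h s j - (2 * real j + 1 + \<alpha>)) = - coeff (Q s n) (n - 1) - real n * (real n + \<alpha>)"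
  using assms
proof (induction n rule: nat_induct_at_least)
  case base then show ?case using coeff_rec[of s 0] by simp
next
  case (Suc m)
  then show ?case using coeff_rec[of s m] by (simp add: algebra_simps)
qed

end

context ow begin

definition cdiff :: "real \<Rightarrow> (real \<Rightarrow> real poly) \<Rightarrow> bool" where "cdiff t p \<longleftrightarrow> (\<forall>k. (\<lambda>s. coeff (p s) k) differentiable (at t))"

lemma cdiff_const: "cdiff t (\<lambda>s. q)" by (simp add: cdiff_def)

lemma cdiff_diff: "cdiff t p \<Longrightarrow> cdiff t q \<Longrightarrow> cdiff t (\<lambda>s. p s - q s)"
  by (simp add: cdiff_def)

lemma cdiff_mult: assumes "cdiff t p" "cdiff t q" shows "cdiff t (\<lambda>s. p s * q s)"
  unfolding cdiff_def coeff_mult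
proof (intro allI differentiable_sum ballI finite_atMost)
  fix k i
  show "(\<lambda>s. coeff (p s) i * coeff (q s) (k - i)) differentiable at t"
    using assms unfolding cdiff_def by (intro differentiable_mult) auto
qed

lemma cdiff_smult: assumes "f differentiable (at t)" "cdiff t p" shows "cdiff t (\<lambda>s. smult (f s) (p s))"
  unfolding cdiff_def coeff_smult
proof
  fix k show "(\<lambda>s. f s * coeff (p s) k) differentiable at t"
    using assms unfolding cdiff_def by (intro differentiable_mult) auto
qed

lemma cdiff_sum: "finite S \<Longrightarrow> (\<And>j. j \<in> S \<Longrightarrow> cdiff t (p j)) \<Longrightarrow> cdiff t (\<lambda>s. \<Sum>j\<in>S. p j s)"
  unfolding cdiff_def coeff_sum by (auto intro!: differentiable_sum)

lemma mu_diffble: "t > 0 \<Longrightarrow> mu k differentiable (at t)"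
  using mu_deriv real_differentiable_def by blast

lemma L_diffble:
  assumes "t > 0" "cdiff t p" "\<And>s. degree (p s) \<le> N"
  shows "(\<lambda>s. L s (p s)) differentiable (at t)"
proof -
  have "(\<lambda>s. L s (p s)) = (\<lambda>s. \<Sum>i\<le>N. coeff (p s) i * mu i s)"
    by (rule ext) (rule L_mu'[OF assms(3)])
  moreover have "(\<lambda>s. \<Sum>i\<le>N. coeff (p s) i * mu i s) differentiable (at t)"
  proof (intro differentiable_sum ballI finite_atMost)
    fix i show "(\<lambda>s. coeff (p s) i * mu i s) differentiable at t"
      using assms(1,2) unfolding cdiff_def by (intro differentiable_mult mu_diffble) auto
  qed
  ultimately show ?thesis by simp
qed

lemma Q_cdiff: assumes "t > 0" shows "cdiff t (\<lambda>s. Q s n)"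
proof (induction n rule: less_induct)
  case (less n)
  show ?case
  proof (cases n)
    case 0 then show ?thesis by (simp add: cdiff_const)
  next
    case (Suc m)
    have cj: "(\<lambda>s. L s (monom 1 (Suc m) * Q s j) / L s (Q s j * Q s j)) differentiable (at t)"
      if "j \<le> m" for j
    proof (rule differentiable_divide)
      show "(\<lambda>s. L s (monom 1 (Suc m) * Q s j)) differentiable (at t)"
      proof (rule L_diffble[OF assms])
        show "cdiff t (\<lambda>s. monom 1 (Suc m) * Q s j)"
          using less[of j] that Suc by (intro cdiff_mult cdiff_const) auto
        fix s show "degree (monom 1 (Suc m) * Q s j) \<le> Suc m + j"
          using degree_mult_le[of "monom 1 (Suc m)" "Q s j"] degree_monom_le[of "1::real" "Suc m"]
          unfolding Q_degree by linarith
      qed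
      show "(\<lambda>s. L s (Q s j * Q s j)) differentiable (at t)"
      proof (rule L_diffble[OF assms])
        show "cdiff t (\<lambda>s. Q s j * Q s j)"
          using less[of j] that Suc by (intro cdiff_mult) auto
        fix s show "degree (Q s j * Q s j) \<le> j + j"
          using degree_mult_le[of "Q s j" "Q s j"] by (simp add: Q_degree)
      qed
      show "L t (Q t j * Q t j) \<noteq> 0" by (rule L_sq_ne[OF Q_ne])
    qed
    have "cdiff t (\<lambda>s. monom 1 (Suc m) -
       (\<Sum>j\<le>m. smult (L s (monom 1 (Suc m) * Q s j) / L s (Q s j * Q s j)) (Q s j)))"
      using less Suc cj by (intro cdiff_diff cdiff_const cdiff_sum cdiff_smult) auto
    then show ?thesis unfolding Suc Q.simps(2) .
  qed
qed

lemma poly_sum_N: "degree (p::real poly) \<le> N \<Longrightarrow> poly p x = (\<Sum>i\<le>N. coeff p i * x ^ i)"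
proof -
  assume "degree p \<le> N"
  then have "poly p x = poly (\<Sum>i\<le>N. monom (coeff p i) i) x" by (simp add: poly_as_sum_of_monoms')
  also have "\<dots> = (\<Sum>i\<le>N. poly (monom (coeff p i) i) x)" by (rule poly_sum)
  also have "\<dots> = (\<Sum>i\<le>N. coeff p i * x ^ i)" by (rule sum.cong) (auto simp: poly_monom)
  finally show ?thesis .
qed

lemma hn_deriv: assumes "t > 0"
  shows "((\<lambda>s. hn \<alpha> A B s n) has_real_derivative (- B * t powr \<alpha> * exp (- t) * (poly (Q t n) t)^2)) (at t)"
proof -
  define c where "c k s = coeff (Q s n * Q s n) k" for k s
  have degQQ: "degree (Q s n * Q s n) \<le> 2 * n" for s
    using degree_mult_le[of "Q s n" "Q s n"] by (simp add: Q_degree)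
  have cd: "c k differentiable (at t)" for k
    using cdiff_mult[OF Q_cdiff[OF assms] Q_cdiff[OF assms], of n n] unfolding cdiff_def c_def by auto
  then have cD: "(c k has_real_derivative deriv (c k) t) (at t)" for k
    using DERIV_deriv_iff_real_differentiable by blast
  have hsum: "hn \<alpha> A B s n = (\<Sum>k\<le>2*n. c k s * mu k s)" for s
    unfolding hn_Q c_def using degQQ by (rule L_mu')
  define phi where "phi s = (\<Sum>k\<le>2*n. c k s * mu k t)" for s
  have phiD: "(phi has_real_derivative (\<Sum>k\<le>2*n. deriv (c k) t * mu k t)) (at t)"
    unfolding phi_def by (intro DERIV_sum) (auto intro!: derivative_eq_intros cD)
  have phimin: "phi t \<le> phi s" for s
  proof -
    have "phi s = L t (Q s n * Q s n)" unfolding phi_def c_def using degQQ by (rule L_mu'[symmetric])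
    moreover have "phi t = L t (Q t n * Q t n)" unfolding phi_def c_def using degQQ by (rule L_mu'[symmetric])
    ultimately show ?thesis using Q_min[of "Q s n" n t] Q_top Q_high by auto
  qed
  have z: "(\<Sum>k\<le>2*n. deriv (c k) t * mu k t) = 0"
    using DERIV_local_min[OF phiD, of 1] phimin by auto
  have "((\<lambda>s. \<Sum>k\<le>2*n. c k s * mu k s) has_real_derivative
      (\<Sum>k\<le>2*n. deriv (c k) t * mu k t + c k t * (- B * g k t))) (at t)"
    by (intro DERIV_sum) (auto intro!: derivative_eq_intros cD mu_deriv assms)
  moreover have "(\<Sum>k\<le>2*n. deriv (c k) t * mu k t + c k t * (- B * g k t))
      = - B * t powr \<alpha> * exp (- t) * (poly (Q t n) t)^2"
  proof -
    have s2: "(\<Sum>k\<le>2*n. c k t * (- B * g k t)) = (- B * t powr \<alpha> * exp (- t)) * (\<Sum>k\<le>2*n. c k t * t ^ k)"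
      unfolding sum_distrib_left by (rule sum.cong) (auto simp: g_def)
    have "(\<Sum>k\<le>2*n. deriv (c k) t * mu k t + c k t * (- B * g k t))
      = (\<Sum>k\<le>2*n. deriv (c k) t * mu k t) + (- B * t powr \<alpha> * exp (- t)) * (\<Sum>k\<le>2*n. c k t * t ^ k)"
      unfolding sum.distrib s2 ..
    also have "(\<Sum>k\<le>2*n. c k t * t ^ k) = poly (Q t n * Q t n) t"
      unfolding c_def by (rule poly_sum_N[OF degQQ, symmetric])
    finally show ?thesis using z by (simp add: power2_eq_square)
  qed
  ultimately show ?thesis unfolding hsum by simp
qed

end

theorem theorem3:
  fixes \<alpha> A B t :: real and n :: nat
  assumes "\<alpha> > 0" and "A \<ge> 0" and "B > 0" and "t > 0" and "n \<ge> 1"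
  shows "(\<lambda>s. ln (Dn \<alpha> A B s n)) differentiable (at t)
    \<and> (\<forall>j<n. (\<lambda>s. ln (hn \<alpha> A B s j)) differentiable (at t))
    \<and> - t * deriv (\<lambda>s. ln (Dn \<alpha> A B s n)) t
        = - t * (\<Sum>j<n. deriv (\<lambda>s. ln (hn \<alpha> A B s j)) t)
    \<and> - t * (\<Sum>j<n. deriv (\<lambda>s. ln (hn \<alpha> A B s j)) t)
        = t * (\<Sum>j<n. Rn \<alpha> A B t j)
    \<and> t * (\<Sum>j<n. Rn \<alpha> A B t j) = - p1 \<alpha> A B t n - real n * (real n + \<alpha>)"
proof -
  interpret ow \<alpha> A B using assms by unfold_locales auto
  have hpos: "hn \<alpha> A B s j > 0" for s j using h_pos[of s j] by (simp add: hn_Q h_def)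
  define d where "d j = - B * t powr \<alpha> * exp (- t) * (poly (Q t j) t)^2 / hn \<alpha> A B t j" for j
  have lnD: "((\<lambda>s. ln (hn \<alpha> A B s j)) has_real_derivative d j) (at t)" for j
  proof -
    have "((\<lambda>s. ln (hn \<alpha> A B s j)) has_real_derivative
        1 / hn \<alpha> A B t j * (- B * t powr \<alpha> * exp (- t) * (poly (Q t j) t)^2)) (at t)"
      by (rule DERIV_chain2[OF DERIV_ln_divide[OF hpos] hn_deriv[OF assms(4)]])
    then show ?thesis by (simp add: d_def)
  qed
  have Dsum: "(\<lambda>s. ln (Dn \<alpha> A B s n)) = (\<lambda>s. \<Sum>j<n. ln (hn \<alpha> A B s j))"
  proof (rule ext)
    fix s
    have hne: "\<And>j. hn \<alpha> A B s j \<noteq> 0" using hpos by (simp add: less_imp_neq[symmetric])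
    show "ln (Dn \<alpha> A B s n) = (\<Sum>j<n. ln (hn \<alpha> A B s j))"
      unfolding Dn_def by (rule ln_prod) (auto simp: hne)
  qed
  have DD: "((\<lambda>s. ln (Dn \<alpha> A B s n)) has_real_derivative (\<Sum>j<n. d j)) (at t)"
    unfolding Dsum by (intro DERIV_sum lnD)
  have derivs: "deriv (\<lambda>s. ln (hn \<alpha> A B s j)) t = d j" for j by (rule DERIV_imp_deriv[OF lnD])
  have tR: "t * Rn \<alpha> A B t j = X t j / h t j - (2 * real j + 1 + \<alpha>)" for j
  proof -
    have e: "(\<alpha> + 1) * h t j + 2 * real j * h t j - X t j
      = - B * t * t powr \<alpha> * exp (- t) * (poly (Q t j) t)^2"
      using T_QQ[of t j] assms(4) by simp
    have hp: "h t j > 0" by (rule h_pos)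
    have "t * Rn \<alpha> A B t j = (B * t * t powr \<alpha> * exp (- t) * (poly (Q t j) t)^2) / h t j"
      by (simp add: Rn_def OP_Q hn_Q h_def)
    also have "\<dots> = (X t j - (\<alpha> + 1) * h t j - 2 * real j * h t j) / h t j"
      using e by (simp add: algebra_simps)
    also have "\<dots> = X t j / h t j - (2 * real j + 1 + \<alpha>)"
      using hp by (simp add: field_simps)
    finally show ?thesis .
  qed
  have dR: "- t * d j = t * Rn \<alpha> A B t j" for j
    by (simp add: d_def Rn_def OP_Q)
  show ?thesis
  proof (intro conjI allI impI)
    show "(\<lambda>s. ln (Dn \<alpha> A B s n)) differentiable (at t)"
      using DD real_differentiable_def by blast
    fix j show "(\<lambda>s. ln (hn \<alpha> A B s j)) differentiable (at t)"
      using lnD real_differentiable_def by blast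
  next
    show "- t * deriv (\<lambda>s. ln (Dn \<alpha> A B s n)) t = - t * (\<Sum>j<n. deriv (\<lambda>s. ln (hn \<alpha> A B s j)) t)"
      using DERIV_imp_deriv[OF DD] derivs by simp
  next
    show "- t * (\<Sum>j<n. deriv (\<lambda>s. ln (hn \<alpha> A B s j)) t) = t * (\<Sum>j<n. Rn \<alpha> A B t j)"
      unfolding derivs sum_distrib_left using dR by simp
  next
    have "t * (\<Sum>j<n. Rn \<alpha> A B t j) = (\<Sum>j<n. X t j / h t j - (2 * real j + 1 + \<alpha>))"
      unfolding sum_distrib_left using tR by simp
    also have "\<dots> = - coeff (Q t n) (n - 1) - real n * (real n + \<alpha>)"
      by (rule sum_rec[OF assms(5)])
    finally show "t * (\<Sum>j<n. Rn \<alpha> A B t j) = - p1 \<alpha> A B t n - real n * (real n + \<alpha>)"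
      by (simp add: p1_def OP_Q)
  qed
qed

end
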